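(* Let $K\ge1$ and $\gamma\in(0,1]$. For each $i\in[K]$ let $E_i$ be a nonnegative random variable with $\mathbb E[E_i]\le1$ when the $i$-th null hypothesis is true. Consider the following sequential procedure: for $t=1,\dots,K$, an index $I_t$ not previously selected is chosen, a current proxy $F^{(t)}_{I_t}\ge0$ is formed (an arbitrary nonnegative random variable, which may depend on initial proxies, on previous indicators $T_{I_1},\dots,T_{I_{t-1}}$, and on previously queried values $E_{I_s}$ with $s<t$, $T_{I_s}=1$), then $T_{I_t}$ is drawn, using fresh independent randomness, with $T_{I_t}\sim\mathrm{Bern}\big((1-\gamma(F^{(t)}_{I_t})^{-1})_+\big)$ given everything observed so far and all $E_j$, and one sets $\tilde E_{I_t}:=F^{(t)}_{I_t}$ if $T_{I_t}=0$ and $\tilde E_{I_t}:=(1-\gamma)E_{I_t}$ if $T_{I_t}=1$ (in which case $E_{I_t}$ is queried). Then each resulting $\tilde E_i$, $i\in[K]$, is a valid e-value: $\tilde E_i\ge0$ and $\mathbb E[\tilde E_i]\le1$ when the $i$-th null is true.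
   Context: $x_+=\max(x,0)$, with $(1-\gamma F^{-1})_+=0$ when $F=0$. *)

theory Defs
  imports "HOL-Probability.Probability"
begin

definition bern_prob :: "real \<Rightarrow> real \<Rightarrow> real" where
  "bern_prob \<gamma> F = (if F = 0 then 0 else max 0 (1 - \<gamma> / F))"

text \<open>Generators of the information observed after steps 1..t of the procedure:
  initial proxies Finit j (j in [K]) and, for each step s \<le> t, the selected index I s,
  the indicator T s and the queried value (E (I s) if T s, else the dummy value 0).\<close>
definition obs_sets ::
  "'a measure \<Rightarrow> nat \<Rightarrow> (nat \<Rightarrow> 'a \<Rightarrow> real) \<Rightarrow> (nat \<Rightarrow> 'a \<Rightarrow> real)
    \<Rightarrow> (nat \<Rightarrow> 'a \<Rightarrow> nat) \<Rightarrow> (nat \<Rightarrow> 'a \<Rightarrow> bool) \<Rightarrow> nat \<Rightarrow> 'a set set" where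
  "obs_sets M K Finit E I T t =
     (\<Union>j\<in>{1..K}. {Finit j -` B \<inter> space M | B. B \<in> sets borel})
   \<union> (\<Union>s\<in>{1..t}. {I s -` B \<inter> space M | B. True}
                  \<union> {T s -` B \<inter> space M | B. True}
                  \<union> {(\<lambda>\<omega>. if T s \<omega> then E (I s \<omega>) \<omega> else 0) -` B \<inter> space M | B. B \<in> sets borel})"

text \<open>Generators of the conditioning information for the draw of T at step t:
  everything observed before step t, the current index I t and proxy F t, and all E j.\<close>
definition hist_sets ::
  "'a measure \<Rightarrow> nat \<Rightarrow> (nat \<Rightarrow> 'a \<Rightarrow> real) \<Rightarrow> (nat \<Rightarrow> 'a \<Rightarrow> real)
    \<Rightarrow> (nat \<Rightarrow> 'a \<Rightarrow> nat) \<Rightarrow> (nat \<Rightarrow> 'a \<Rightarrow> real) \<Rightarrow> (nat \<Rightarrow> 'a \<Rightarrow> bool) \<Rightarrow> nat \<Rightarrow> 'a set set" where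
  "hist_sets M K Finit E I F T t =
     obs_sets M K Finit E I T (t - 1)
   \<union> {I t -` B \<inter> space M | B. True}
   \<union> {F t -` B \<inter> space M | B. B \<in> sets borel}
   \<union> (\<Union>j\<in>{1..K}. {E j -` B \<inter> space M | B. B \<in> sets borel})"

definition etilde ::
  "nat \<Rightarrow> real \<Rightarrow> (nat \<Rightarrow> 'a \<Rightarrow> real) \<Rightarrow> (nat \<Rightarrow> 'a \<Rightarrow> nat) \<Rightarrow> (nat \<Rightarrow> 'a \<Rightarrow> real)
    \<Rightarrow> (nat \<Rightarrow> 'a \<Rightarrow> bool) \<Rightarrow> nat \<Rightarrow> 'a \<Rightarrow> real" where
  "etilde K \<gamma> E I F T i \<omega> =
     (let t = (THE t. t \<in> {1..K} \<and> I t \<omega> = i)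
      in if T t \<omega> then (1 - \<gamma>) * E i \<omega> else F t \<omega>)"

end

theory Submission
  imports Defs
begin

lemma cond_transfer:
  assumes M: "finite_measure M"
  and Hsub: "subalgebra M H"
  and S: "S \<in> sets M"
  and q: "q \<in> borel_measurable M" "\<And>\<omega>. \<omega> \<in> space M \<Longrightarrow> 0 \<le> q \<omega> \<and> q \<omega> \<le> 1"
  and eq: "\<And>A. A \<in> sets H \<Longrightarrow> measure M (A \<inter> S) = (\<integral>\<omega>. indicator A \<omega> * q \<omega> \<partial>M)"
  and g: "g \<in> borel_measurable H"
  shows "(\<integral>\<^sup>+\<omega>. g \<omega> * indicator S \<omega> \<partial>M) = (\<integral>\<^sup>+\<omega>. g \<omega> * ennreal (q \<omega>) \<partial>M)"
  using g
proof (induct rule: borel_measurable_induct)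
  case (cong f g)
  have sp: "space H = space M" using Hsub by (simp add: subalgebra_def)
  have "(\<integral>\<^sup>+\<omega>. f \<omega> * indicator S \<omega> \<partial>M) = (\<integral>\<^sup>+\<omega>. g \<omega> * indicator S \<omega> \<partial>M)"
    by (rule nn_integral_cong) (use cong sp in auto)
  also have "\<dots> = (\<integral>\<^sup>+\<omega>. g \<omega> * ennreal (q \<omega>) \<partial>M)" by (rule cong)
  also have "\<dots> = (\<integral>\<^sup>+\<omega>. f \<omega> * ennreal (q \<omega>) \<partial>M)"
    by (rule nn_integral_cong) (use cong sp in auto)
  finally show ?case .
next
  case (set A)
  interpret finite_measure M by fact
  have AM: "A \<in> sets M" using Hsub set by (auto simp: subalgebra_def)
  have "(\<integral>\<^sup>+\<omega>. indicator A \<omega> * indicator S \<omega> \<partial>M) = emeasure M (A \<inter> S)"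
    using AM S by (simp add: nn_integral_indicator[symmetric] indicator_inter_arith[symmetric] del: nn_integral_indicator)
  also have "\<dots> = ennreal (measure M (A \<inter> S))" using emeasure_eq_measure by blast
  also have "\<dots> = ennreal (\<integral>\<omega>. indicator A \<omega> * q \<omega> \<partial>M)" using eq set by simp
  also have "\<dots> = (\<integral>\<^sup>+\<omega>. ennreal (indicator A \<omega> * q \<omega>) \<partial>M)"
  proof (rule nn_integral_eq_integral[symmetric])
    show "integrable M (\<lambda>\<omega>. indicator A \<omega> * q \<omega>)"
      by (rule integrable_const_bound[where B=1]) (use q AM in \<open>auto simp: indicator_def\<close>)
    show "AE x in M. 0 \<le> indicator A x * q x" using q by (auto simp: indicator_def)
  qed
  also have "\<dots> = (\<integral>\<^sup>+\<omega>. indicator A \<omega> * ennreal (q \<omega>) \<partial>M)"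
    by (rule nn_integral_cong) (auto simp: indicator_def)
  finally show ?case .
next
  case (mult u c)
  have uM: "u \<in> borel_measurable M" using mult Hsub by (simp add: measurable_from_subalg)
  have "(\<integral>\<^sup>+\<omega>. c * u \<omega> * indicator S \<omega> \<partial>M) = c * (\<integral>\<^sup>+\<omega>. u \<omega> * indicator S \<omega> \<partial>M)"
    using uM S by (simp add: mult.assoc nn_integral_cmult)
  also have "\<dots> = c * (\<integral>\<^sup>+\<omega>. u \<omega> * ennreal (q \<omega>) \<partial>M)" using mult by simp
  also have "\<dots> = (\<integral>\<^sup>+\<omega>. c * u \<omega> * ennreal (q \<omega>) \<partial>M)"
    using uM q by (simp add: mult.assoc nn_integral_cmult)
  finally show ?case .
next
  case (add u v)
  have uM: "u \<in> borel_measurable M" "v \<in> borel_measurable M" using add Hsub by (simp_all add: measurable_from_subalg)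
  have "(\<integral>\<^sup>+\<omega>. (v \<omega> + u \<omega>) * indicator S \<omega> \<partial>M) = (\<integral>\<^sup>+\<omega>. v \<omega> * indicator S \<omega> \<partial>M) + (\<integral>\<^sup>+\<omega>. u \<omega> * indicator S \<omega> \<partial>M)"
    using uM S by (simp add: distrib_right nn_integral_add)
  also have "\<dots> = (\<integral>\<^sup>+\<omega>. v \<omega> * ennreal (q \<omega>) \<partial>M) + (\<integral>\<^sup>+\<omega>. u \<omega> * ennreal (q \<omega>) \<partial>M)" using add by simp
  also have "\<dots> = (\<integral>\<^sup>+\<omega>. (v \<omega> + u \<omega>) * ennreal (q \<omega>) \<partial>M)"
    using uM q by (simp add: distrib_right nn_integral_add)
  finally show ?case .
next
  case (seq U)
  have uM: "U i \<in> borel_measurable M" for i using seq Hsub by (simp_all add: measurable_from_subalg)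
  have inc1: "incseq (\<lambda>i \<omega>. U i \<omega> * indicator S \<omega>)"
    using seq(4) by (auto simp: incseq_def le_fun_def intro: mult_right_mono)
  have inc2: "incseq (\<lambda>i \<omega>. U i \<omega> * ennreal (q \<omega>))"
    using seq(4) by (auto simp: incseq_def le_fun_def intro: mult_right_mono)
  have "(\<integral>\<^sup>+\<omega>. (SUP i. U i) \<omega> * indicator S \<omega> \<partial>M) = (\<integral>\<^sup>+\<omega>. (SUP i. U i \<omega> * indicator S \<omega>) \<partial>M)"
    by (simp add: SUP_apply SUP_mult_right_ennreal image_image)
  also have "\<dots> = (SUP i. \<integral>\<^sup>+\<omega>. U i \<omega> * indicator S \<omega> \<partial>M)"
    by (rule nn_integral_monotone_convergence_SUP[OF inc1]) (use uM S in simp)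
  also have "\<dots> = (SUP i. \<integral>\<^sup>+\<omega>. U i \<omega> * ennreal (q \<omega>) \<partial>M)" using seq by simp
  also have "\<dots> = (\<integral>\<^sup>+\<omega>. (SUP i. U i \<omega> * ennreal (q \<omega>)) \<partial>M)"
    by (rule nn_integral_monotone_convergence_SUP[OF inc2, symmetric]) (use uM q in simp)
  also have "\<dots> = (\<integral>\<^sup>+\<omega>. (SUP i. U i) \<omega> * ennreal (q \<omega>) \<partial>M)"
    by (simp add: SUP_apply SUP_mult_right_ennreal image_image)
  finally show ?case .
qed


lemma in_sigma_gen: "G \<subseteq> Pow \<Omega> \<Longrightarrow> X \<in> G \<Longrightarrow> X \<in> sets (sigma \<Omega> G)"
  by (simp add: sigma_sets.Basic)

lemma meas_sigma_gen:
  assumes "G \<subseteq> Pow \<Omega>" "\<And>B. B \<in> sets borel \<Longrightarrow> f -` B \<inter> \<Omega> \<in> G"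
  shows "f \<in> borel_measurable (sigma \<Omega> G)"
  by (rule measurableI) (use assms in \<open>auto intro: sigma_sets.Basic\<close>)

lemma subalg_sigma:
  assumes "G \<subseteq> sets M" shows "subalgebra M (sigma (space M) G)"
proof -
  have G: "G \<subseteq> Pow (space M)" using assms sets.sets_into_space by blast
  show ?thesis unfolding subalgebra_def
    using G assms by (simp add: sets.sigma_sets_subset)
qed

lemma bern_prob_bounds:
  assumes "0 < g" "0 \<le> x"
  shows "0 \<le> bern_prob g x" "bern_prob g x \<le> 1" "x * (1 - bern_prob g x) \<le> g"
proof -
  show "0 \<le> bern_prob g x" by (simp add: bern_prob_def)
  show "bern_prob g x \<le> 1" using assms by (simp add: bern_prob_def)
  show "x * (1 - bern_prob g x) \<le> g"
  proof (cases "x = 0")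
    case True then show ?thesis using assms by (simp add: bern_prob_def)
  next
    case False
    then have xp: "x > 0" using assms by simp
    show ?thesis
    proof (cases "1 - g / x \<le> 0")
      case True
      then have "x \<le> g" using xp by (simp add: field_simps)
      then show ?thesis using True False by (simp add: bern_prob_def)
    next
      case c: False
      then have "bern_prob g x = 1 - g / x" using False by (simp add: bern_prob_def)
      then show ?thesis using xp by (simp add: field_simps)
    qed
  qed
qed

lemma hist_pow: "hist_sets M K Finit E I F T t \<subseteq> Pow (space M)"
  unfolding hist_sets_def obs_sets_def by (intro Un_least UN_least) auto

lemma hist_sub:
  assumes t: "t \<in> {1..K}"
    and Finit_meas: "\<And>j. j \<in> {1..K} \<Longrightarrow> Finit j \<in> borel_measurable M"
    and E_meas: "\<And>j. j \<in> {1..K} \<Longrightarrow> E j \<in> borel_measurable M"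
    and I_meas: "\<And>t. t \<in> {1..K} \<Longrightarrow> I t \<in> measurable M (count_space UNIV)"
    and T_meas: "\<And>t. t \<in> {1..K} \<Longrightarrow> T t \<in> measurable M (count_space UNIV)"
    and F_meas: "\<And>t. t \<in> {1..K} \<Longrightarrow> F t \<in> borel_measurable M"
    and EI_meas: "\<And>s. s \<in> {1..K} \<Longrightarrow> (\<lambda>\<omega>. if T s \<omega> then E (I s \<omega>) \<omega> else 0) \<in> borel_measurable M"
  shows "hist_sets M K Finit E I F T t \<subseteq> sets M"
proof -
  have sK: "s \<in> {1..K}" if "s \<in> {1..t-1}" for s using that t by auto
  show ?thesis unfolding hist_sets_def obs_sets_def
  proof (intro Un_least UN_least subsetI)
    fix j X assume "j \<in> {1..K}" "X \<in> {Finit j -` B \<inter> space M | B. B \<in> sets borel}"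
    then show "X \<in> sets M" using measurable_sets[OF Finit_meas] by blast
  next
    fix s X assume "s \<in> {1..t-1}" "X \<in> {I s -` B \<inter> space M | B. True}"
    then show "X \<in> sets M" using measurable_sets[OF I_meas[OF sK]] by auto
  next
    fix s X assume "s \<in> {1..t-1}" "X \<in> {T s -` B \<inter> space M | B. True}"
    then show "X \<in> sets M" using measurable_sets[OF T_meas[OF sK]] by auto
  next
    fix s X assume "s \<in> {1..t-1}" "X \<in> {(\<lambda>\<omega>. if T s \<omega> then E (I s \<omega>) \<omega> else 0) -` B \<inter> space M | B. B \<in> sets borel}"
    then show "X \<in> sets M" using measurable_sets[OF EI_meas[OF sK]] by blast
  next
    fix X assume "X \<in> {I t -` B \<inter> space M | B. True}"
    then show "X \<in> sets M" using measurable_sets[OF I_meas[OF t]] by auto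
  next
    fix X assume "X \<in> {F t -` B \<inter> space M | B. B \<in> sets borel}"
    then show "X \<in> sets M" using measurable_sets[OF F_meas[OF t]] by blast
  next
    fix j X assume "j \<in> {1..K}" "X \<in> {E j -` B \<inter> space M | B. B \<in> sets borel}"
    then show "X \<in> sets M" using measurable_sets[OF E_meas] by blast
  qed
qed

theorem proposition8:
  fixes M :: "'a measure" and K :: nat and \<gamma> :: real
    and E :: "nat \<Rightarrow> 'a \<Rightarrow> real"
    and Finit :: "nat \<Rightarrow> 'a \<Rightarrow> real"
    and I :: "nat \<Rightarrow> 'a \<Rightarrow> nat"
    and F :: "nat \<Rightarrow> 'a \<Rightarrow> real"
    and T :: "nat \<Rightarrow> 'a \<Rightarrow> bool"
  assumes "prob_space M"
    and "K \<ge> 1" and "0 < \<gamma>" and "\<gamma> \<le> 1"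
    and E_meas: "\<And>j. j \<in> {1..K} \<Longrightarrow> E j \<in> borel_measurable M"
    and E_nonneg: "\<And>j \<omega>. j \<in> {1..K} \<Longrightarrow> \<omega> \<in> space M \<Longrightarrow> E j \<omega> \<ge> 0"
    and Finit_meas: "\<And>j. j \<in> {1..K} \<Longrightarrow> Finit j \<in> borel_measurable M"
    and I_meas: "\<And>t. t \<in> {1..K} \<Longrightarrow> I t \<in> measurable M (count_space UNIV)"
    and T_meas: "\<And>t. t \<in> {1..K} \<Longrightarrow> T t \<in> measurable M (count_space UNIV)"
    and F_meas: "\<And>t. t \<in> {1..K} \<Longrightarrow> F t \<in> borel_measurable M"
    and I_perm: "\<And>\<omega>. \<omega> \<in> space M \<Longrightarrow> bij_betw (\<lambda>t. I t \<omega>) {1..K} {1..K}"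
    and I_adapted: "\<And>t. t \<in> {1..K} \<Longrightarrow>
          I t \<in> measurable (sigma (space M) (obs_sets M K Finit E I T (t - 1))) (count_space UNIV)"
    and F_adapted: "\<And>t. t \<in> {1..K} \<Longrightarrow>
          F t \<in> borel_measurable (sigma (space M) (obs_sets M K Finit E I T (t - 1)))"
    and F_nonneg: "\<And>t \<omega>. t \<in> {1..K} \<Longrightarrow> \<omega> \<in> space M \<Longrightarrow> F t \<omega> \<ge> 0"
    and T_bern: "\<And>t A. t \<in> {1..K} \<Longrightarrow> A \<in> sets (sigma (space M) (hist_sets M K Finit E I F T t)) \<Longrightarrow>
          measure M (A \<inter> {\<omega> \<in> space M. T t \<omega>})
            = (\<integral>\<omega>. indicator A \<omega> * bern_prob \<gamma> (F t \<omega>) \<partial>M)"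
  shows "\<forall>i \<in> {1..K}.
           etilde K \<gamma> E I F T i \<in> borel_measurable M
         \<and> (\<forall>\<omega> \<in> space M. etilde K \<gamma> E I F T i \<omega> \<ge> 0)
         \<and> ((\<integral>\<^sup>+ \<omega>. ennreal (E i \<omega>) \<partial>M) \<le> 1
              \<longrightarrow> (\<integral>\<^sup>+ \<omega>. ennreal (etilde K \<gamma> E I F T i \<omega>) \<partial>M) \<le> 1)"
proof -
  interpret prob_space M by fact
  define H where "H t = sigma (space M) (hist_sets M K Finit E I F T t)" for t
  define p where "p t \<omega> = bern_prob \<gamma> (F t \<omega>)" for t \<omega>
  define ST where "ST t = {\<omega> \<in> space M. T t \<omega>}" for t
  define SF where "SF t = {\<omega> \<in> space M. \<not> T t \<omega>}" for t
  have EI_meas: "(\<lambda>\<omega>. if T s \<omega> then E (I s \<omega>) \<omega> else 0) \<in> borel_measurable M" if s: "s \<in> {1..K}" for s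
  proof -
    define E' where "E' j = (if j \<in> {1..K} then E j else (\<lambda>_. 0))" for j
    have m1: "(\<lambda>\<omega>. E' (I s \<omega>) \<omega>) \<in> borel_measurable M"
    proof (rule measurable_compose_countable'[where I=UNIV and f=E' and g="I s"])
      show "(\<lambda>x. E' j x) \<in> borel_measurable M" if "j \<in> UNIV" for j
        by (cases "j \<in> {1..K}") (simp_all add: E'_def E_meas)
      show "I s \<in> measurable M (count_space UNIV)" by (rule I_meas[OF s])
    qed simp
    have eq: "E' (I s \<omega>) \<omega> = E (I s \<omega>) \<omega>" if w: "\<omega> \<in> space M" for \<omega>
    proof -
      have "I s \<omega> \<in> {1..K}" using bij_betwE[OF I_perm[OF w]] s by blast
      then show ?thesis by (simp add: E'_def)
    qed
    have m2: "(\<lambda>\<omega>. E (I s \<omega>) \<omega>) \<in> borel_measurable M"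
    proof -
      have "(\<lambda>\<omega>. E (I s \<omega>) \<omega>) \<in> borel_measurable M \<longleftrightarrow> (\<lambda>\<omega>. E' (I s \<omega>) \<omega>) \<in> borel_measurable M"
        by (rule measurable_cong) (simp add: eq)
      then show ?thesis using m1 by simp
    qed
    have m3: "{\<omega> \<in> space M. T s \<omega>} \<in> sets M"
    proof -
      have "T s -` {True} \<inter> space M \<in> sets M" using measurable_sets[OF T_meas[OF s]] by simp
      moreover have "T s -` {True} \<inter> space M = {\<omega> \<in> space M. T s \<omega>}" by auto
      ultimately show ?thesis by simp
    qed
    show ?thesis by (rule measurable_If[OF m2 _ m3]) simp
  qed
  have hist_sub: "hist_sets M K Finit E I F T t \<subseteq> sets M" if t: "t \<in> {1..K}" for t
    by (rule hist_sub[OF t Finit_meas E_meas I_meas T_meas F_meas EI_meas])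
  note hist_pow = hist_pow[of M K Finit E I F T]
  have subH: "subalgebra M (H t)" if "t \<in> {1..K}" for t
    unfolding H_def by (rule subalg_sigma[OF hist_sub[OF that]])
  have ST_sets: "ST t \<in> sets M" "SF t \<in> sets M" if t: "t \<in> {1..K}" for t
  proof -
    have "T t -` {True} \<inter> space M \<in> sets M" using measurable_sets[OF T_meas[OF t]] by simp
    moreover have "T t -` {True} \<inter> space M = ST t" by (auto simp: ST_def)
    ultimately show "ST t \<in> sets M" by simp
    then show "SF t \<in> sets M" using sets.compl_sets[of "ST t"] by (simp add: ST_def SF_def Diff_eq set_diff_eq)
  qed
  have p_meas: "p t \<in> borel_measurable M" if t: "t \<in> {1..K}" for t
    using F_meas[OF t] unfolding p_def bern_prob_def by measurable
  have p_b: "0 \<le> p t \<omega>" "p t \<omega> \<le> 1" "F t \<omega> * (1 - p t \<omega>) \<le> \<gamma>" if "t \<in> {1..K}" "\<omega> \<in> space M" for t \<omega>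
    using bern_prob_bounds[OF \<open>0 < \<gamma>\<close> F_nonneg[OF that]] by (simp_all add: p_def)
  have transT: "(\<integral>\<^sup>+\<omega>. g \<omega> * indicator (ST t) \<omega> \<partial>M) = (\<integral>\<^sup>+\<omega>. g \<omega> * ennreal (p t \<omega>) \<partial>M)"
    if t: "t \<in> {1..K}" and g: "g \<in> borel_measurable (H t)" for t g
  proof (rule cond_transfer[OF _ subH[OF t] ST_sets(1)[OF t] p_meas[OF t] _ _ g])
    show "finite_measure M" by unfold_locales
    show "0 \<le> p t \<omega> \<and> p t \<omega> \<le> 1" if "\<omega> \<in> space M" for \<omega> using p_b t that by auto
    show "measure M (A \<inter> ST t) = (\<integral>\<omega>. indicator A \<omega> * p t \<omega> \<partial>M)" if "A \<in> sets (H t)" for A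
      using T_bern[OF t, of A] that by (simp add: H_def ST_def p_def)
  qed
  have transF: "(\<integral>\<^sup>+\<omega>. g \<omega> * indicator (SF t) \<omega> \<partial>M) = (\<integral>\<^sup>+\<omega>. g \<omega> * ennreal (1 - p t \<omega>) \<partial>M)"
    if t: "t \<in> {1..K}" and g: "g \<in> borel_measurable (H t)" for t g
  proof (rule cond_transfer[OF _ subH[OF t] ST_sets(2)[OF t] _ _ _ g])
    show "finite_measure M" by unfold_locales
    show "(\<lambda>\<omega>. 1 - p t \<omega>) \<in> borel_measurable M" using p_meas[OF t] by measurable
    show "0 \<le> 1 - p t \<omega> \<and> 1 - p t \<omega> \<le> 1" if "\<omega> \<in> space M" for \<omega> using p_b t that by auto
    fix A assume A: "A \<in> sets (H t)"
    then have AM: "A \<in> sets M" using subH[OF t] by (auto simp: subalgebra_def)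
    have int1: "integrable M (\<lambda>\<omega>. indicator A \<omega> * p t \<omega>)"
      by (rule integrable_const_bound[where B=1]) (use p_b t p_meas[OF t] AM in \<open>auto simp: indicator_def\<close>)
    have int0: "integrable M (indicator A :: 'a \<Rightarrow> real)"
      by (rule integrable_const_bound[where B=1]) (use AM in \<open>auto simp: indicator_def\<close>)
    have "A \<inter> SF t = A - (A \<inter> ST t)" using sets.sets_into_space[OF AM] by (auto simp: ST_def SF_def)
    then have "measure M (A \<inter> SF t) = measure M A - measure M (A \<inter> ST t)"
      using finite_measure_Diff[of A "A \<inter> ST t"] AM ST_sets[OF t] by auto
    also have "\<dots> = (\<integral>\<omega>. indicator A \<omega> \<partial>M) - (\<integral>\<omega>. indicator A \<omega> * p t \<omega> \<partial>M)"
      using T_bern[OF t, of A] A AM by (simp add: H_def ST_def p_def)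
    also have "\<dots> = (\<integral>\<omega>. indicator A \<omega> - indicator A \<omega> * p t \<omega> \<partial>M)"
      using int0 int1 by simp
    also have "\<dots> = (\<integral>\<omega>. indicator A \<omega> * (1 - p t \<omega>) \<partial>M)"
      by (simp add: algebra_simps)
    finally show "measure M (A \<inter> SF t) = (\<integral>\<omega>. indicator A \<omega> * (1 - p t \<omega>) \<partial>M)" .
  qed
  show ?thesis
  proof (intro ballI conjI impI)
    fix i assume i: "i \<in> {1..K}"
    define IS where "IS t = {\<omega> \<in> space M. I t \<omega> = i}" for t
    define V where "V t \<omega> = (if T t \<omega> then (1 - \<gamma>) * E i \<omega> else F t \<omega>)" for t \<omega>
    have uniq: "\<exists>!t. t \<in> {1..K} \<and> I t \<omega> = i" if w: "\<omega> \<in> space M" for \<omega>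
    proof -
      have b: "bij_betw (\<lambda>t. I t \<omega>) {1..K} {1..K}" by (rule I_perm[OF w])
      then have "i \<in> (\<lambda>t. I t \<omega>) ` {1..K}" using i by (simp add: bij_betw_def)
      then obtain t where t: "t \<in> {1..K}" "I t \<omega> = i" by blast
      have "inj_on (\<lambda>t. I t \<omega>) {1..K}" using b by (simp add: bij_betw_def)
      then have "t' = t" if "t' \<in> {1..K}" "I t' \<omega> = i" for t'
        using that t by (auto dest: inj_onD)
      then show ?thesis using t by blast
    qed
    have pick: "\<exists>t0. t0 \<in> {1..K} \<and> I t0 \<omega> = i \<and> (\<forall>t\<in>{1..K}. I t \<omega> = i \<longleftrightarrow> t = t0)
          \<and> etilde K \<gamma> E I F T i \<omega> = V t0 \<omega>" if w: "\<omega> \<in> space M" for \<omega>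
    proof -
      define t0 where "t0 = (THE t. t \<in> {1..K} \<and> I t \<omega> = i)"
      have t0: "t0 \<in> {1..K}" "I t0 \<omega> = i" using theI'[OF uniq[OF w]] unfolding t0_def by auto
      have iff: "\<forall>t\<in>{1..K}. I t \<omega> = i \<longleftrightarrow> t = t0" using uniq[OF w] t0 by blast
      have "etilde K \<gamma> E I F T i \<omega> = V t0 \<omega>"
        unfolding etilde_def Let_def t0_def[symmetric] V_def by simp
      then show ?thesis using t0 iff by blast
    qed
    have Vnn: "0 \<le> V t \<omega>" if "t \<in> {1..K}" "\<omega> \<in> space M" for t \<omega>
      using E_nonneg[OF i that(2)] F_nonneg[OF that] \<open>\<gamma> \<le> 1\<close> by (simp add: V_def)
    show "0 \<le> etilde K \<gamma> E I F T i \<omega>" if w: "\<omega> \<in> space M" for \<omega>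
    proof -
      obtain t0 where "t0 \<in> {1..K}" "etilde K \<gamma> E I F T i \<omega> = V t0 \<omega>" using pick[OF w] by blast
      then show "0 \<le> etilde K \<gamma> E I F T i \<omega>" using Vnn[OF _ w] by simp
    qed
    have IS_sets: "IS t \<in> sets M" if t: "t \<in> {1..K}" for t
    proof -
      have "I t -` {i} \<inter> space M \<in> sets M" using measurable_sets[OF I_meas[OF t]] by simp
      moreover have "I t -` {i} \<inter> space M = IS t" by (auto simp: IS_def)
      ultimately show ?thesis by simp
    qed
    have V_meas: "V t \<in> borel_measurable M" if t: "t \<in> {1..K}" for t
    proof -
      have "(\<lambda>\<omega>. (1 - \<gamma>) * E i \<omega>) \<in> borel_measurable M" using E_meas[OF i] by simp
      then show ?thesis unfolding V_def
        by (rule measurable_If[OF _ F_meas[OF t]]) (use ST_sets(1)[OF t] in \<open>simp add: ST_def\<close>)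
    qed
    have R: "etilde K \<gamma> E I F T i \<omega> = (\<Sum>t\<in>{1..K}. indicator (IS t) \<omega> * V t \<omega>)" if w: "\<omega> \<in> space M" for \<omega>
    proof -
      obtain t0 where t0: "t0 \<in> {1..K}" "I t0 \<omega> = i" "\<forall>t\<in>{1..K}. I t \<omega> = i \<longleftrightarrow> t = t0"
        "etilde K \<gamma> E I F T i \<omega> = V t0 \<omega>" using pick[OF w] by blast
      have "(\<Sum>t\<in>{1..K}. indicator (IS t) \<omega> * V t \<omega>) = (\<Sum>t\<in>{1..K}. if t = t0 then V t \<omega> else 0)"
        by (rule sum.cong) (use t0 w in \<open>auto simp: IS_def\<close>)
      also have "\<dots> = V t0 \<omega>" using t0 by simp
      finally show ?thesis using t0 by simp
    qed
    show "etilde K \<gamma> E I F T i \<in> borel_measurable M"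
    proof -
      have "(\<lambda>\<omega>. \<Sum>t\<in>{1..K}. indicator (IS t) \<omega> * V t \<omega>) \<in> borel_measurable M"
        by (rule borel_measurable_sum) (use IS_sets V_meas in simp)
      moreover have "etilde K \<gamma> E I F T i \<in> borel_measurable M \<longleftrightarrow> (\<lambda>\<omega>. \<Sum>t\<in>{1..K}. indicator (IS t) \<omega> * V t \<omega>) \<in> borel_measurable M"
        by (rule measurable_cong) (simp add: R)
      ultimately show ?thesis by simp
    qed
    assume Ei: "(\<integral>\<^sup>+\<omega>. ennreal (E i \<omega>) \<partial>M) \<le> 1"
    define g1 where "g1 t \<omega> = ennreal (indicator (IS t) \<omega> * ((1 - \<gamma>) * E i \<omega>))" for t \<omega>
    define g2 where "g2 t \<omega> = ennreal (indicator (IS t) \<omega> * F t \<omega>)" for t \<omega>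
    have gH: "g1 t \<in> borel_measurable (H t)" "g2 t \<in> borel_measurable (H t)" if t: "t \<in> {1..K}" for t
    proof -
      have ISH: "IS t \<in> sets (H t)" unfolding H_def
        by (rule in_sigma_gen[OF hist_pow]) (auto simp: hist_sets_def IS_def)
      have EH: "E i \<in> borel_measurable (H t)" unfolding H_def
        by (rule meas_sigma_gen[OF hist_pow]) (use i in \<open>auto simp: hist_sets_def\<close>)
      have FH: "F t \<in> borel_measurable (H t)" unfolding H_def
        by (rule meas_sigma_gen[OF hist_pow]) (auto simp: hist_sets_def)
      show "g1 t \<in> borel_measurable (H t)" unfolding g1_def
        using ISH EH by measurable
      show "g2 t \<in> borel_measurable (H t)" unfolding g2_def
        using ISH FH by measurable
    qed
    have gM: "g1 t \<in> borel_measurable M" "g2 t \<in> borel_measurable M" if t: "t \<in> {1..K}" for t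
      using gH[OF t] subH[OF t] by (simp_all add: measurable_from_subalg)
    have dec: "ennreal (etilde K \<gamma> E I F T i \<omega>) =
        (\<Sum>t\<in>{1..K}. g1 t \<omega> * indicator (ST t) \<omega> + g2 t \<omega> * indicator (SF t) \<omega>)"
      if w: "\<omega> \<in> space M" for \<omega>
    proof -
      obtain t0 where t0: "t0 \<in> {1..K}" "I t0 \<omega> = i" "\<forall>t\<in>{1..K}. I t \<omega> = i \<longleftrightarrow> t = t0"
        "etilde K \<gamma> E I F T i \<omega> = V t0 \<omega>" using pick[OF w] by blast
      have "(\<Sum>t\<in>{1..K}. g1 t \<omega> * indicator (ST t) \<omega> + g2 t \<omega> * indicator (SF t) \<omega>)
          = (\<Sum>t\<in>{1..K}. if t = t0 then ennreal (V t \<omega>) else 0)"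
      proof (rule sum.cong)
        fix t assume t: "t \<in> {1..K}"
        show "g1 t \<omega> * indicator (ST t) \<omega> + g2 t \<omega> * indicator (SF t) \<omega> = (if t = t0 then ennreal (V t \<omega>) else 0)"
        proof (cases "t = t0")
          case True
          then show ?thesis using t0 w
            by (cases "T t \<omega>") (auto simp: g1_def g2_def IS_def ST_def SF_def V_def)
        next
          case False
          then show ?thesis using t0 t w by (auto simp: g1_def g2_def IS_def)
        qed
      qed simp
      also have "\<dots> = ennreal (V t0 \<omega>)" using t0 by simp
      finally show ?thesis using t0 by simp
    qed
    have bnd: "(\<Sum>t\<in>{1..K}. g1 t \<omega> * ennreal (p t \<omega>) + g2 t \<omega> * ennreal (1 - p t \<omega>))
          \<le> ennreal ((1 - \<gamma>) * E i \<omega> + \<gamma>)" if w: "\<omega> \<in> space M" for \<omega>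
    proof -
      obtain t0 where t0: "t0 \<in> {1..K}" "I t0 \<omega> = i" "\<forall>t\<in>{1..K}. I t \<omega> = i \<longleftrightarrow> t = t0"
        using pick[OF w] by blast
      have "(\<Sum>t\<in>{1..K}. g1 t \<omega> * ennreal (p t \<omega>) + g2 t \<omega> * ennreal (1 - p t \<omega>))
          = (\<Sum>t\<in>{1..K}. if t = t0 then ennreal ((1 - \<gamma>) * E i \<omega> * p t \<omega> + F t \<omega> * (1 - p t \<omega>)) else 0)"
      proof (rule sum.cong)
        fix t assume t: "t \<in> {1..K}"
        have pb: "0 \<le> p t \<omega>" "p t \<omega> \<le> 1" using p_b[OF t w] by auto
        have e0: "0 \<le> (1 - \<gamma>) * E i \<omega>" using E_nonneg[OF i w] \<open>\<gamma> \<le> 1\<close> by simp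
        have f0: "0 \<le> F t \<omega>" using F_nonneg[OF t w] .
        show "g1 t \<omega> * ennreal (p t \<omega>) + g2 t \<omega> * ennreal (1 - p t \<omega>) =
          (if t = t0 then ennreal ((1 - \<gamma>) * E i \<omega> * p t \<omega> + F t \<omega> * (1 - p t \<omega>)) else 0)"
        proof (cases "t = t0")
          case True
          then have "indicator (IS t) \<omega> = (1::real)" using t0 w by (simp add: IS_def)
          then show ?thesis using True pb e0 f0
            by (simp add: g1_def g2_def ennreal_mult'[symmetric] ennreal_plus[symmetric] del: ennreal_plus)
        next
          case False
          then show ?thesis using t0 t w by (auto simp: g1_def g2_def IS_def)
        qed
      qed simp
      also have "\<dots> = ennreal ((1 - \<gamma>) * E i \<omega> * p t0 \<omega> + F t0 \<omega> * (1 - p t0 \<omega>))" using t0 by simp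
      also have "\<dots> \<le> ennreal ((1 - \<gamma>) * E i \<omega> + \<gamma>)"
      proof (rule ennreal_leI)
        have pb: "p t0 \<omega> \<le> 1" "F t0 \<omega> * (1 - p t0 \<omega>) \<le> \<gamma>" using p_b[OF t0(1) w] by auto
        have e0: "0 \<le> (1 - \<gamma>) * E i \<omega>" using E_nonneg[OF i w] \<open>\<gamma> \<le> 1\<close> by simp
        have "(1 - \<gamma>) * E i \<omega> * p t0 \<omega> \<le> (1 - \<gamma>) * E i \<omega>"
          using mult_left_mono[OF pb(1) e0] by simp
        then show "(1 - \<gamma>) * E i \<omega> * p t0 \<omega> + F t0 \<omega> * (1 - p t0 \<omega>) \<le> (1 - \<gamma>) * E i \<omega> + \<gamma>"
          using pb(2) by linarith
      qed
      finally show ?thesis .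
    qed
    have "(\<integral>\<^sup>+\<omega>. ennreal (etilde K \<gamma> E I F T i \<omega>) \<partial>M)
        = (\<integral>\<^sup>+\<omega>. (\<Sum>t\<in>{1..K}. g1 t \<omega> * indicator (ST t) \<omega> + g2 t \<omega> * indicator (SF t) \<omega>) \<partial>M)"
      by (rule nn_integral_cong) (simp add: dec)
    also have "\<dots> = (\<Sum>t\<in>{1..K}. (\<integral>\<^sup>+\<omega>. g1 t \<omega> * indicator (ST t) \<omega> \<partial>M) + (\<integral>\<^sup>+\<omega>. g2 t \<omega> * indicator (SF t) \<omega> \<partial>M))"
      by (subst nn_integral_sum) (use gM ST_sets in \<open>auto intro!: sum.cong nn_integral_add\<close>)
    also have "\<dots> = (\<Sum>t\<in>{1..K}. (\<integral>\<^sup>+\<omega>. g1 t \<omega> * ennreal (p t \<omega>) \<partial>M) + (\<integral>\<^sup>+\<omega>. g2 t \<omega> * ennreal (1 - p t \<omega>) \<partial>M))"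
      by (rule sum.cong) (use gH transT transF in auto)
    also have "\<dots> = (\<integral>\<^sup>+\<omega>. (\<Sum>t\<in>{1..K}. g1 t \<omega> * ennreal (p t \<omega>) + g2 t \<omega> * ennreal (1 - p t \<omega>)) \<partial>M)"
      by (subst nn_integral_sum) (use gM p_meas in \<open>auto intro!: sum.cong nn_integral_add[symmetric]\<close>)
    also have "\<dots> \<le> (\<integral>\<^sup>+\<omega>. ennreal ((1 - \<gamma>) * E i \<omega> + \<gamma>) \<partial>M)"
      by (rule nn_integral_mono) (rule bnd)
    also have "\<dots> = (\<integral>\<^sup>+\<omega>. ennreal (1 - \<gamma>) * ennreal (E i \<omega>) + ennreal \<gamma> \<partial>M)"
    proof (rule nn_integral_cong)
      fix \<omega> assume w: "\<omega> \<in> space M"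
      have e0: "0 \<le> (1 - \<gamma>) * E i \<omega>" using E_nonneg[OF i w] \<open>\<gamma> \<le> 1\<close> by simp
      have "ennreal ((1 - \<gamma>) * E i \<omega> + \<gamma>) = ennreal ((1 - \<gamma>) * E i \<omega>) + ennreal \<gamma>"
        using e0 \<open>0 < \<gamma>\<close> by (simp add: ennreal_plus)
      also have "\<dots> = ennreal (1 - \<gamma>) * ennreal (E i \<omega>) + ennreal \<gamma>"
        using \<open>\<gamma> \<le> 1\<close> by (simp add: ennreal_mult')
      finally show "ennreal ((1 - \<gamma>) * E i \<omega> + \<gamma>) = ennreal (1 - \<gamma>) * ennreal (E i \<omega>) + ennreal \<gamma>" .
    qed
    also have "\<dots> = ennreal (1 - \<gamma>) * (\<integral>\<^sup>+\<omega>. ennreal (E i \<omega>) \<partial>M) + ennreal \<gamma>"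
      using E_meas[OF i] by (simp add: nn_integral_add nn_integral_cmult emeasure_space_1)
    also have "\<dots> \<le> ennreal (1 - \<gamma>) * 1 + ennreal \<gamma>"
      by (intro add_mono mult_left_mono Ei) auto
    also have "\<dots> = 1" using \<open>\<gamma> \<le> 1\<close> \<open>0 < \<gamma>\<close> by (simp del: ennreal_plus add: ennreal_plus[symmetric])
    finally show "(\<integral>\<^sup>+\<omega>. ennreal (etilde K \<gamma> E I F T i \<omega>) \<partial>M) \<le> 1" .
  qed
qed

end
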